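(* Let $(X_n)_{n\in\mathbb{Z}}$ be a strictly stationary sequence jointly regularly varying with index $\alpha>0$, with tail process $(Y_i)_{i\in\mathbb{Z}}$, and assume $\theta:=\Pr(\sup_{i\le-1}|Y_i|\le1)>0$ and that $|Y_n|\to0$ almost surely as $|n|\to\infty$. Fix $0<v<u<\infty$ and let $$N^{(v)}=\sum_i\sum_j\delta_{(T_i^{(v)},\,vZ_{ij})}\Big|_{[0,1]\times\mathbb{E}_v},$$ where $\sum_i\delta_{T_i^{(v)}}$ is a homogeneous Poisson process on $[0,1]$ with intensity $\theta v^{-\alpha}$ and $(\sum_j\delta_{Z_{ij}})_i$ is an i.i.d. sequence of point processes on $\mathbb{E}$, independent of the Poisson process, each distributed as $\sum_{n\in\mathbb{Z}}\delta_{Y_n}$ conditionally on $\{\sup_{i\le-1}|Y_i|\le1\}$. Assume that with probability one the tail process $(Y_i)_{i\in\mathbb{Z}}$ has no two values of opposite sign. Then $\Pr(N^{(v)}\in\Lambda)=1$, where $\Lambda=\Lambda_1\cap\Lambda_2$ with $\Lambda_1=\{\eta\in\mathbf M_p([0,1]\times\mathbb{E}_v):\eta(\{0,1\}\times\mathbb{E}_u)=0=\eta([0,1]\times\{\pm\infty,\pm u\})\}$, $\Lambda_2=\{\eta\in\mathbf M_p([0,1]\times\mathbb{E}_v):\eta(\{t\}\times(v,\infty])\wedge\eta(\{t\}\times[-\infty,-v))=0\text{ for all }t\in[0,1]\}$.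
   Context: $\mathbb{E}=[-\infty,\infty]\setminus\{0\}$, topologized so as to be homeomorphic to $[-1,1]\setminus\{0\}$; $\mathbb{E}_u=\mathbb{E}\setminus[-u,u]$ for $u>0$. $\mathbf M_p(S)$ is the space of Radon point measures on $S$. Joint regular variation with index $\alpha$: for every $k$, $(X_1,\dots,X_k)$ is multivariate regularly varying with index $\alpha$. The tail process $(Y_n)_{n\in\mathbb{Z}}$ is the process with $\Pr(|Y_0|>y)=y^{-\alpha}$ for $y\ge1$ such that the finite-dimensional distributions of $(x^{-1}X_n)_{n\in\mathbb{Z}}$ given $|X_0|>x$ converge to those of $(Y_n)$ as $x\to\infty$; it satisfies $Y_i=|Y_0|\Theta_i$ with $|Y_0|$ independent of $(\Theta_i)$. *)

theory Defs
  imports "HOL-Probability.Probability"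
begin

definition mv_regvar :: "'a measure \<Rightarrow> int set \<Rightarrow> (int \<Rightarrow> 'a \<Rightarrow> real) \<Rightarrow> real \<Rightarrow> bool" where
  "mv_regvar M J X \<alpha> \<longleftrightarrow>
     (\<exists>S. prob_space S \<and> sets S = sets (PiM J (\<lambda>_. borel)) \<and>
          (AE f in S. (MAX i\<in>J. \<bar>f i\<bar>) = 1) \<and>
          (\<forall>(h :: (int \<Rightarrow> real) \<Rightarrow> real) (t::real).
              continuous_on UNIV h \<and> bounded (range h) \<and> 0 < t \<longrightarrow>
              ((\<lambda>x::real.
                  (\<integral>\<omega>. indicator {\<omega>\<in>space M. t * x < (MAX i\<in>J. \<bar>X i \<omega>\<bar>)} \<omega>
                        * h (restrict (\<lambda>i. X i \<omega> / (MAX k\<in>J. \<bar>X k \<omega>\<bar>)) J) \<partial>M)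
                  / measure M {\<omega>\<in>space M. x < (MAX i\<in>J. \<bar>X i \<omega>\<bar>)})
               \<longlongrightarrow> t powr (-\<alpha>) * (\<integral>f. h f \<partial>S)) at_top))"

definition jointly_regvar :: "'a measure \<Rightarrow> (int \<Rightarrow> 'a \<Rightarrow> real) \<Rightarrow> real \<Rightarrow> bool" where
  "jointly_regvar M X \<alpha> \<longleftrightarrow> (\<forall>k::int. 1 \<le> k \<longrightarrow> mv_regvar M {1..k} X \<alpha>)"

definition strictly_stationary :: "'a measure \<Rightarrow> (int \<Rightarrow> 'a \<Rightarrow> real) \<Rightarrow> bool" where
  "strictly_stationary M X \<longleftrightarrow>
     (\<forall>k::int. distr M (PiM UNIV (\<lambda>_::int. borel)) (\<lambda>\<omega> n. X (n + k) \<omega>)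
             = distr M (PiM UNIV (\<lambda>_::int. borel)) (\<lambda>\<omega> n. X n \<omega>))"

definition tail_process :: "'a measure \<Rightarrow> (int \<Rightarrow> 'a \<Rightarrow> real) \<Rightarrow> (int \<Rightarrow> 'a \<Rightarrow> real) \<Rightarrow> real \<Rightarrow> bool" where
  "tail_process M X Y \<alpha> \<longleftrightarrow>
     (\<forall>y::real. 1 \<le> y \<longrightarrow> measure M {\<omega>\<in>space M. y < \<bar>Y 0 \<omega>\<bar>} = y powr (-\<alpha>)) \<and>
     (\<forall>(J::int set) (h :: (int \<Rightarrow> real) \<Rightarrow> real).
        finite J \<and> continuous_on UNIV h \<and> bounded (range h) \<longrightarrow>
        ((\<lambda>x::real.
            (\<integral>\<omega>. indicator {\<omega>\<in>space M. x < \<bar>X 0 \<omega>\<bar>} \<omega> * h (restrict (\<lambda>n. X n \<omega> / x) J) \<partial>M)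
            / measure M {\<omega>\<in>space M. x < \<bar>X 0 \<omega>\<bar>})
         \<longlongrightarrow> (\<integral>\<omega>. h (restrict (\<lambda>n. Y n \<omega>) J) \<partial>M)) at_top)"

definition ecard :: "'b set \<Rightarrow> enat" where
  "ecard A = (if finite A then enat (card A) else \<infinity>)"

definition Eset :: "real \<Rightarrow> ereal set" where
  "Eset u = {x. ereal u < \<bar>x\<bar>}"

definition Mp :: "(real \<times> ereal) set \<Rightarrow> ((real \<times> ereal) set \<Rightarrow> enat) set" where
  "Mp S = {\<eta>. (\<exists>(I::nat set) p. p ` I \<subseteq> S \<and> (\<forall>B. \<eta> B = ecard {k\<in>I. p k \<in> B}))
              \<and> (\<forall>C. compact C \<and> C \<subseteq> S \<longrightarrow> \<eta> C \<noteq> \<infinity>)}"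

definition Lambda1 :: "real \<Rightarrow> real \<Rightarrow> ((real \<times> ereal) set \<Rightarrow> enat) set" where
  "Lambda1 v u = {\<eta> \<in> Mp ({0..1} \<times> Eset v).
      \<eta> ({0, 1} \<times> Eset u) = 0 \<and> \<eta> ({0..1} \<times> {\<infinity>, -\<infinity>, ereal u, - ereal u}) = 0}"

definition Lambda2 :: "real \<Rightarrow> ((real \<times> ereal) set \<Rightarrow> enat) set" where
  "Lambda2 v = {\<eta> \<in> Mp ({0..1} \<times> Eset v).
      \<forall>t\<in>{0..1}. min (\<eta> ({t} \<times> {x. ereal v < x})) (\<eta> ({t} \<times> {x. x < - ereal v})) = 0}"

definition Nv :: "real \<Rightarrow> ('a \<Rightarrow> nat) \<Rightarrow> (nat \<Rightarrow> 'a \<Rightarrow> real) \<Rightarrow> (nat \<Rightarrow> int \<Rightarrow> 'a \<Rightarrow> real)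
                  \<Rightarrow> 'a \<Rightarrow> (real \<times> ereal) set \<Rightarrow> enat" where
  "Nv v K T Z \<omega> B = ecard {(i, j). i < K \<omega> \<and> T i \<omega> \<in> {0..1}
        \<and> ereal (v * Z i j \<omega>) \<in> Eset v \<and> (T i \<omega>, ereal (v * Z i j \<omega>)) \<in> B}"

definition pcount :: "('a \<Rightarrow> nat) \<Rightarrow> (nat \<Rightarrow> 'a \<Rightarrow> real) \<Rightarrow> real set \<Rightarrow> 'a \<Rightarrow> nat" where
  "pcount K T A \<omega> = card {i. i < K \<omega> \<and> T i \<omega> \<in> A}"

definition hom_poisson_01 :: "'a measure \<Rightarrow> real \<Rightarrow> ('a \<Rightarrow> nat) \<Rightarrow> (nat \<Rightarrow> 'a \<Rightarrow> real) \<Rightarrow> bool" where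
  "hom_poisson_01 M lam K T \<longleftrightarrow>
     K \<in> measurable M (count_space UNIV) \<and> (\<forall>i. T i \<in> borel_measurable M) \<and>
     (\<forall>\<omega>\<in>space M. \<forall>i < K \<omega>. T i \<omega> \<in> {0..1}) \<and>
     (\<forall>(m::nat) (A :: nat \<Rightarrow> real set).
        (\<forall>j<m. A j \<in> sets borel \<and> A j \<subseteq> {0..1}) \<and> disjoint_family_on A {..<m} \<longrightarrow>
        prob_space.indep_vars M (\<lambda>_. count_space UNIV) (\<lambda>j. pcount K T (A j)) {..<m} \<and>
        (\<forall>j<m. \<forall>n::nat. measure M {\<omega>\<in>space M. pcount K T (A j) \<omega> = n}
             = (lam * measure lborel (A j)) ^ n / fact n * exp (- (lam * measure lborel (A j)))))"

end

theory Submission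
  imports Defs
begin

lemma hom_identity:
  fixes M :: "'a measure" and X Y :: "int \<Rightarrow> 'a \<Rightarrow> real" and \<phi> \<psi> :: "real \<Rightarrow> real"
  assumes tail: "tail_process M X Y \<alpha>"
    and phic: "continuous_on UNIV \<phi>" and psic: "continuous_on UNIV \<psi>"
    and phib: "\<And>r. \<bar>\<phi> r\<bar> \<le> 1" and psib: "\<And>r. \<bar>\<psi> r\<bar> \<le> 1"
    and phi0: "\<And>r. r \<le> 1 \<Longrightarrow> \<phi> r = 0" and s: "1 \<le> s"
  shows "(\<integral>\<omega>. \<phi> (\<bar>Y 0 \<omega>\<bar>/s) * \<psi> (Y j \<omega>/s) \<partial>M) * (\<integral>\<omega>. \<phi> \<bar>Y 0 \<omega>\<bar> \<partial>M)
       = (\<integral>\<omega>. \<phi> (\<bar>Y 0 \<omega>\<bar>/s) \<partial>M) * (\<integral>\<omega>. \<phi> \<bar>Y 0 \<omega>\<bar> * \<psi> (Y j \<omega>) \<partial>M)"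
proof -
  define J where "J = {0::int, j}"
  define P where "P x = measure M {\<omega>\<in>space M. x < \<bar>X 0 \<omega>\<bar>}" for x
  define N where "N h x = (\<integral>\<omega>. indicator {\<omega>\<in>space M. x < \<bar>X 0 \<omega>\<bar>} \<omega> * h (restrict (\<lambda>n. X n \<omega> / x) J) \<partial>M)"
    for h :: "(int \<Rightarrow> real) \<Rightarrow> real" and x
  have L: "((\<lambda>x. N h x / P x) \<longlongrightarrow> (\<integral>\<omega>. h (restrict (\<lambda>n. Y n \<omega>) J) \<partial>M)) at_top"
    if "continuous_on UNIV h" "bounded (range h)" for h
    using tail that unfolding tail_process_def N_def P_def J_def by auto
  define h1 where "h1 f = \<phi> (\<bar>f 0\<bar>/s) * \<psi> (f j/s)" for f :: "int \<Rightarrow> real"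
  define h2 where "h2 f = \<phi> \<bar>f 0\<bar>" for f :: "int \<Rightarrow> real"
  define h3 where "h3 f = \<phi> (\<bar>f 0\<bar>/s)" for f :: "int \<Rightarrow> real"
  define h4 where "h4 f = \<phi> \<bar>f 0\<bar> * \<psi> (f j)" for f :: "int \<Rightarrow> real"
  have cphi: "continuous_on UNIV (\<lambda>f::int\<Rightarrow>real. \<phi> (g f))" if "continuous_on UNIV g" for g
    using continuous_on_compose2[OF phic that] by auto
  have cpsi: "continuous_on UNIV (\<lambda>f::int\<Rightarrow>real. \<psi> (g f))" if "continuous_on UNIV g" for g
    using continuous_on_compose2[OF psic that] by auto
  have c0: "continuous_on UNIV (\<lambda>f::int\<Rightarrow>real. f i)" for i by simp
  have bnd: "bounded (range h)" if "\<And>f. \<bar>h f\<bar> \<le> 1" for h :: "(int \<Rightarrow> real) \<Rightarrow> real"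
    using that by (auto simp: bounded_iff intro!: exI[of _ 1])
  have L1: "((\<lambda>x. N h1 x / P x) \<longlongrightarrow> (\<integral>\<omega>. \<phi> (\<bar>Y 0 \<omega>\<bar>/s) * \<psi> (Y j \<omega>/s) \<partial>M)) at_top"
  proof -
    have "continuous_on UNIV h1" unfolding h1_def by (intro continuous_on_mult cphi cpsi continuous_on_divide continuous_on_rabs c0 continuous_on_const) (use s in auto)?
    moreover have "bounded (range h1)" unfolding h1_def by (rule bnd) (auto simp: abs_mult phib psib mult_le_one)
    ultimately show ?thesis using L[of h1] by (simp add: h1_def J_def)
  qed
  have L2: "((\<lambda>x. N h2 x / P x) \<longlongrightarrow> (\<integral>\<omega>. \<phi> \<bar>Y 0 \<omega>\<bar> \<partial>M)) at_top"
  proof -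
    have "continuous_on UNIV h2" unfolding h2_def by (intro cphi continuous_on_rabs c0) (use s in auto)?
    moreover have "bounded (range h2)" unfolding h2_def by (rule bnd) (auto simp: abs_mult phib psib mult_le_one)
    ultimately show ?thesis using L[of h2] by (simp add: h2_def J_def)
  qed
  have L3: "((\<lambda>x. N h3 x / P x) \<longlongrightarrow> (\<integral>\<omega>. \<phi> (\<bar>Y 0 \<omega>\<bar>/s) \<partial>M)) at_top"
  proof -
    have "continuous_on UNIV h3" unfolding h3_def by (intro cphi continuous_on_divide continuous_on_rabs c0 continuous_on_const) (use s in auto)?
    moreover have "bounded (range h3)" unfolding h3_def by (rule bnd) (auto simp: abs_mult phib psib mult_le_one)
    ultimately show ?thesis using L[of h3] by (simp add: h3_def J_def)
  qed
  have L4: "((\<lambda>x. N h4 x / P x) \<longlongrightarrow> (\<integral>\<omega>. \<phi> \<bar>Y 0 \<omega>\<bar> * \<psi> (Y j \<omega>) \<partial>M)) at_top"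
  proof -
    have "continuous_on UNIV h4" unfolding h4_def by (intro continuous_on_mult cphi cpsi continuous_on_rabs c0) (use s in auto)?
    moreover have "bounded (range h4)" unfolding h4_def by (rule bnd) (auto simp: abs_mult phib psib mult_le_one)
    ultimately show ?thesis using L[of h4] by (simp add: h4_def J_def)
  qed
  have fs: "filterlim (\<lambda>x. s * x) at_top at_top"
    using s by (intro filterlim_tendsto_pos_mult_at_top[OF tendsto_const]) (auto simp: filterlim_ident)
  have L2': "((\<lambda>x. N h2 (s*x) / P (s*x)) \<longlongrightarrow> (\<integral>\<omega>. \<phi> \<bar>Y 0 \<omega>\<bar> \<partial>M)) at_top"
    using filterlim_compose[OF L2 fs] by simp
  have L4': "((\<lambda>x. N h4 (s*x) / P (s*x)) \<longlongrightarrow> (\<integral>\<omega>. \<phi> \<bar>Y 0 \<omega>\<bar> * \<psi> (Y j \<omega>) \<partial>M)) at_top"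
    using filterlim_compose[OF L4 fs] by simp
  have E1: "N h1 x = N h4 (s*x)" if x: "0 < x" for x
    unfolding N_def
  proof (rule Bochner_Integration.integral_cong[OF refl])
    fix \<omega> assume "\<omega> \<in> space M"
    have e: "\<bar>X 0 \<omega> / x\<bar> / s = \<bar>X 0 \<omega> / (s*x)\<bar>" "X j \<omega> / x / s = X j \<omega> / (s*x)"
      using x s by (auto simp: abs_divide field_simps)
    show "indicator {\<omega> \<in> space M. x < \<bar>X 0 \<omega>\<bar>} \<omega> * h1 (restrict (\<lambda>n. X n \<omega> / x) J) =
          indicator {\<omega> \<in> space M. s*x < \<bar>X 0 \<omega>\<bar>} \<omega> * h4 (restrict (\<lambda>n. X n \<omega> / (s*x)) J)"
    proof (cases "s*x < \<bar>X 0 \<omega>\<bar>")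
      case True
      then have "x < \<bar>X 0 \<omega>\<bar>" using x s by (smt (verit) mult_le_cancel_right1)
      then show ?thesis using True \<open>\<omega> \<in> space M\<close> x s unfolding h1_def h4_def J_def by (simp add: abs_divide abs_mult mult.commute)
    next
      case False
      then have "\<bar>X 0 \<omega> / (s*x)\<bar> \<le> 1" using x s by (simp add: abs_divide divide_le_eq)
      then have z2: "\<phi> \<bar>X 0 \<omega> / (s*x)\<bar> = 0" by (rule phi0)
      then have z1: "\<phi> (\<bar>X 0 \<omega> / x\<bar> / s) = 0" by (simp only: e)
      show ?thesis by (simp only: h1_def h4_def J_def restrict_apply insert_iff simp_thms if_True z1 z2 mult_zero_left mult_zero_right)
    qed
  qed
  have E2: "N h3 x = N h2 (s*x)" if x: "0 < x" for x
    unfolding N_def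
  proof (rule Bochner_Integration.integral_cong[OF refl])
    fix \<omega> assume "\<omega> \<in> space M"
    have e: "\<bar>X 0 \<omega> / x\<bar> / s = \<bar>X 0 \<omega> / (s*x)\<bar>"
      using x s by (auto simp: abs_divide field_simps)
    show "indicator {\<omega> \<in> space M. x < \<bar>X 0 \<omega>\<bar>} \<omega> * h3 (restrict (\<lambda>n. X n \<omega> / x) J) =
          indicator {\<omega> \<in> space M. s*x < \<bar>X 0 \<omega>\<bar>} \<omega> * h2 (restrict (\<lambda>n. X n \<omega> / (s*x)) J)"
    proof (cases "s*x < \<bar>X 0 \<omega>\<bar>")
      case True
      then have "x < \<bar>X 0 \<omega>\<bar>" using x s by (smt (verit) mult_le_cancel_right1)
      then show ?thesis using True \<open>\<omega> \<in> space M\<close> x s unfolding h3_def h2_def J_def by (simp add: abs_divide abs_mult mult.commute)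
    next
      case False
      then have "\<bar>X 0 \<omega> / (s*x)\<bar> \<le> 1" using x s by (simp add: abs_divide divide_le_eq)
      then have z2: "\<phi> \<bar>X 0 \<omega> / (s*x)\<bar> = 0" by (rule phi0)
      then have z1: "\<phi> (\<bar>X 0 \<omega> / x\<bar> / s) = 0" by (simp only: e)
      show ?thesis by (simp only: h3_def h2_def J_def restrict_apply insert_iff simp_thms if_True z1 z2 mult_zero_left mult_zero_right)
    qed
  qed
  have ev: "\<forall>\<^sub>F x in at_top. (N h1 x / P x) * (N h2 (s*x) / P (s*x)) = (N h3 x / P x) * (N h4 (s*x) / P (s*x))"
    using eventually_gt_at_top[of "0::real"]
    by eventually_elim (simp add: E1 E2)
  have A: "((\<lambda>x. (N h1 x / P x) * (N h2 (s*x) / P (s*x))) \<longlongrightarrow>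
     (\<integral>\<omega>. \<phi> (\<bar>Y 0 \<omega>\<bar>/s) * \<psi> (Y j \<omega>/s) \<partial>M) * (\<integral>\<omega>. \<phi> \<bar>Y 0 \<omega>\<bar> \<partial>M)) at_top"
    by (intro tendsto_mult L1 L2')
  have B: "((\<lambda>x. (N h3 x / P x) * (N h4 (s*x) / P (s*x))) \<longlongrightarrow>
     (\<integral>\<omega>. \<phi> (\<bar>Y 0 \<omega>\<bar>/s) \<partial>M) * (\<integral>\<omega>. \<phi> \<bar>Y 0 \<omega>\<bar> * \<psi> (Y j \<omega>) \<partial>M)) at_top"
    by (intro tendsto_mult L3 L4')
  show ?thesis
    using tendsto_unique[OF _ tendsto_cong[THEN iffD2, OF ev B] A] by simp
qed

lemma dom_ind:
  fixes f :: "nat \<Rightarrow> 'a \<Rightarrow> real"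
  assumes P: "prob_space M" and fm: "\<And>n. f n \<in> borel_measurable M" and S: "S \<in> sets M"
    and b: "\<And>n \<omega>. \<omega> \<in> space M \<Longrightarrow> \<bar>f n \<omega>\<bar> \<le> 1"
    and l: "\<And>\<omega>. \<omega> \<in> space M \<Longrightarrow> (\<lambda>n. f n \<omega>) \<longlonglongrightarrow> indicator S \<omega>"
  shows "(\<lambda>n. \<integral>\<omega>. f n \<omega> \<partial>M) \<longlonglongrightarrow> measure M S"
proof -
  interpret prob_space M by (rule P)
  have "(\<lambda>n. \<integral>\<omega>. f n \<omega> \<partial>M) \<longlonglongrightarrow> (\<integral>\<omega>. indicator S \<omega> \<partial>M)"
    by (rule integral_dominated_convergence[where w="\<lambda>_. 1"])
       (use fm S b l in \<open>auto intro!: AE_I2\<close>)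
  then show ?thesis using S by (simp add: Int_absorb2 sets.sets_into_space)
qed

lemma phi_lim: "(\<lambda>n. min 1 (max 0 (real n * (r - 1)))) \<longlonglongrightarrow> (if 1 < r then 1 else (0::real))"
proof (cases "1 < r")
  case True
  obtain N :: nat where N: "1 / (r - 1) < N" using reals_Archimedean2 by blast
  have "eventually (\<lambda>n. min 1 (max 0 (real n * (r - 1))) = 1) sequentially"
    unfolding eventually_sequentially
  proof (intro exI allI impI)
    fix n assume "N \<le> n"
    then have "1 / (r - 1) < real n" using N by linarith
    then have "1 \<le> real n * (r - 1)" using True by (simp add: divide_less_eq)
    then show "min 1 (max 0 (real n * (r - 1))) = 1" by simp
  qed
  then show ?thesis using True by (simp add: tendsto_eventually)
next
  case False
  then have "\<And>n. real n * (r - 1) \<le> 0" by (simp add: mult_nonneg_nonpos)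
  then show ?thesis using False by simp
qed

lemma psi_lim:
  assumes "0 \<le> (d::real)"
  shows "(\<lambda>n. max 0 (1 - real n * d)) \<longlonglongrightarrow> (if d = 0 then 1 else 0)"
proof (cases "d = 0")
  case False
  then have dp: "0 < d" using assms by simp
  obtain N :: nat where N: "1 / d < N" using reals_Archimedean2 by blast
  have "eventually (\<lambda>n. max 0 (1 - real n * d) = 0) sequentially"
    unfolding eventually_sequentially
  proof (intro exI allI impI)
    fix n assume "N \<le> n"
    then have "1 / d < real n" using N by linarith
    then have "1 \<le> real n * d" using dp by (simp add: divide_less_eq)
    then show "max 0 (1 - real n * d) = 0" by simp
  qed
  then show ?thesis using False by (simp add: tendsto_eventually)
qed simp

lemma no_atom:
  fixes M :: "'a measure" and X Y :: "int \<Rightarrow> 'a \<Rightarrow> real"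
  assumes P: "prob_space M" and tail: "tail_process M X Y \<alpha>"
    and Ym: "\<And>n. Y n \<in> borel_measurable M" and c: "0 < c"
  shows "measure M {\<omega>\<in>space M. \<bar>Y j \<omega>\<bar> = c} = 0"
proof (rule ccontr)
  interpret prob_space M by (rule P)
  assume a0: "measure M {\<omega>\<in>space M. \<bar>Y j \<omega>\<bar> = c} \<noteq> 0"
  have Y0: "measure M {\<omega>\<in>space M. y < \<bar>Y 0 \<omega>\<bar>} = y powr (-\<alpha>)" if "1 \<le> y" for y
    using tail that unfolding tail_process_def by auto
  define ph where "ph n r = min 1 (max 0 (real n * (r - 1)))" for n :: nat and r :: real
  define ps where "ps n y = max 0 (1 - real n * \<bar>\<bar>y\<bar> - c\<bar>)" for n :: nat and y :: real
  define S4 where "S4 = {\<omega>\<in>space M. 1 < \<bar>Y 0 \<omega>\<bar> \<and> \<bar>Y j \<omega>\<bar> = c}"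
  have key: "measure M {\<omega>\<in>space M. 1 < \<bar>Y 0 \<omega>\<bar>/s \<and> \<bar>Y j \<omega>/s\<bar> = c} = s powr (-\<alpha>) * measure M S4"
    if s: "1 \<le> s" for s
  proof -
    define S1 where "S1 = {\<omega>\<in>space M. 1 < \<bar>Y 0 \<omega>\<bar>/s \<and> \<bar>Y j \<omega>/s\<bar> = c}"
    define S2 where "S2 = {\<omega>\<in>space M. 1 < \<bar>Y 0 \<omega>\<bar>}"
    define S3 where "S3 = {\<omega>\<in>space M. 1 < \<bar>Y 0 \<omega>\<bar>/s}"
    have id: "(\<integral>\<omega>. ph n (\<bar>Y 0 \<omega>\<bar>/s) * ps n (Y j \<omega>/s) \<partial>M) * (\<integral>\<omega>. ph n \<bar>Y 0 \<omega>\<bar> \<partial>M)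
       = (\<integral>\<omega>. ph n (\<bar>Y 0 \<omega>\<bar>/s) \<partial>M) * (\<integral>\<omega>. ph n \<bar>Y 0 \<omega>\<bar> * ps n (Y j \<omega>) \<partial>M)" for n
      by (rule hom_identity[OF tail]) (use s in \<open>auto simp: ph_def ps_def mult_nonneg_nonpos intro!: continuous_intros\<close>)
    have phb: "\<bar>ph n r\<bar> \<le> 1" for n r by (simp add: ph_def)
    have psb: "\<bar>ps n r\<bar> \<le> 1" for n r by (simp add: ps_def)
    have pl: "(\<lambda>n. ph n r) \<longlonglongrightarrow> (if 1 < r then 1 else 0)" for r unfolding ph_def by (rule phi_lim)
    have pl1: "(\<lambda>n. ph n r) \<longlonglongrightarrow> 1" if "1 < r" for r using pl[of r] that by simp
    have pl0: "(\<lambda>n. ph n r) \<longlonglongrightarrow> 0" if "\<not> 1 < r" for r using pl[of r] that by simp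
    have ql: "(\<lambda>n. ps n y) \<longlonglongrightarrow> (if \<bar>y\<bar> = c then 1 else 0)" for y
      using psi_lim[of "\<bar>\<bar>y\<bar> - c\<bar>"] unfolding ps_def by simp
    have meas: "ph n \<in> borel_measurable borel" "ps n \<in> borel_measurable borel" for n
      unfolding ph_def ps_def by measurable
    have L1: "(\<lambda>n. \<integral>\<omega>. ph n (\<bar>Y 0 \<omega>\<bar>/s) * ps n (Y j \<omega>/s) \<partial>M) \<longlonglongrightarrow> measure M S1"
      by (rule dom_ind[OF P]) (use pl ql phb psb meas Ym in \<open>auto simp: S1_def abs_mult mult_le_one indicator_def intro!: tendsto_eq_intros\<close>)
    have L2: "(\<lambda>n. \<integral>\<omega>. ph n \<bar>Y 0 \<omega>\<bar> \<partial>M) \<longlonglongrightarrow> measure M S2"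
      by (rule dom_ind[OF P]) (use pl ql phb psb meas Ym in \<open>auto simp: S2_def abs_mult mult_le_one indicator_def intro: pl1 pl0\<close>)
    have L3: "(\<lambda>n. \<integral>\<omega>. ph n (\<bar>Y 0 \<omega>\<bar>/s) \<partial>M) \<longlonglongrightarrow> measure M S3"
      by (rule dom_ind[OF P]) (use pl ql phb psb meas Ym in \<open>auto simp: S3_def abs_mult mult_le_one indicator_def intro: pl1 pl0\<close>)
    have L4: "(\<lambda>n. \<integral>\<omega>. ph n \<bar>Y 0 \<omega>\<bar> * ps n (Y j \<omega>) \<partial>M) \<longlonglongrightarrow> measure M S4"
      by (rule dom_ind[OF P]) (use pl ql phb psb meas Ym in \<open>auto simp: S4_def abs_mult mult_le_one indicator_def intro!: tendsto_eq_intros\<close>)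
    have eq: "measure M S1 * measure M S2 = measure M S3 * measure M S4"
      using LIMSEQ_unique[OF tendsto_mult[OF L1 L2]] tendsto_mult[OF L3 L4] id by simp
    have "S2 = {\<omega>\<in>space M. 1 < \<bar>Y 0 \<omega>\<bar>}" by (simp add: S2_def)
    then have m2: "measure M S2 = 1" using Y0[of 1] by simp
    have "S3 = {\<omega>\<in>space M. s < \<bar>Y 0 \<omega>\<bar>}" using s by (auto simp: S3_def field_simps)
    then have m3: "measure M S3 = s powr (-\<alpha>)" using Y0[OF s] by simp
    show ?thesis using eq m2 m3 by (simp add: S1_def)
  qed
  have S4m: "S4 \<in> sets M" unfolding S4_def using Ym by measurable
  have "{\<omega>\<in>space M. \<bar>Y j \<omega>\<bar> = c} \<subseteq> S4 \<union> (space M - {\<omega>\<in>space M. 1 < \<bar>Y 0 \<omega>\<bar>})"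
    by (auto simp: S4_def)
  moreover have "measure M (space M - {\<omega>\<in>space M. 1 < \<bar>Y 0 \<omega>\<bar>}) = 0"
  proof -
    have "{\<omega>\<in>space M. 1 < \<bar>Y 0 \<omega>\<bar>} \<in> sets M" using Ym by measurable
    then show ?thesis using prob_compl Y0[of 1] by simp
  qed
  moreover have "{\<omega>\<in>space M. 1 < \<bar>Y 0 \<omega>\<bar>} \<in> sets M" using Ym by measurable
  ultimately have "measure M {\<omega>\<in>space M. \<bar>Y j \<omega>\<bar> = c} \<le> measure M S4"
  proof -
    assume sub: "{\<omega>\<in>space M. \<bar>Y j \<omega>\<bar> = c} \<subseteq> S4 \<union> (space M - {\<omega>\<in>space M. 1 < \<bar>Y 0 \<omega>\<bar>})"
      and z: "measure M (space M - {\<omega>\<in>space M. 1 < \<bar>Y 0 \<omega>\<bar>}) = 0"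
      and cm: "{\<omega>\<in>space M. 1 < \<bar>Y 0 \<omega>\<bar>} \<in> sets M"
    have cm': "space M - {\<omega>\<in>space M. 1 < \<bar>Y 0 \<omega>\<bar>} \<in> sets M" using cm by blast
    have "measure M {\<omega>\<in>space M. \<bar>Y j \<omega>\<bar> = c} \<le> measure M (S4 \<union> (space M - {\<omega>\<in>space M. 1 < \<bar>Y 0 \<omega>\<bar>}))"
      by (rule finite_measure_mono[OF sub]) (use S4m cm' in blast)
    also have "\<dots> \<le> measure M S4 + measure M (space M - {\<omega>\<in>space M. 1 < \<bar>Y 0 \<omega>\<bar>})"
      by (rule measure_subadditive[OF S4m cm']) simp_all
    finally show ?thesis using z by simp
  qed
  moreover have "0 < measure M {\<omega>\<in>space M. \<bar>Y j \<omega>\<bar> = c}"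
    using a0 measure_nonneg[of M "{\<omega>\<in>space M. \<bar>Y j \<omega>\<bar> = c}"] by linarith
  ultimately have pos4: "0 < measure M S4" by linarith
  define D where "D = distr M borel (\<lambda>\<omega>. \<bar>Y j \<omega>\<bar>)"
  have Yjm: "(\<lambda>\<omega>. \<bar>Y j \<omega>\<bar>) \<in> borel_measurable M" using Ym by measurable
  interpret D: finite_measure D unfolding D_def by (rule finite_measure_distr[OF Yjm])
  have "{c..2*c} \<subseteq> {y. measure D {y} \<noteq> 0}"
  proof
    fix y assume y: "y \<in> {c..2*c}"
    define s where "s = y / c"
    have s1: "1 \<le> s" using y c by (simp add: s_def)
    have "measure D {y} = measure M {\<omega>\<in>space M. \<bar>Y j \<omega>\<bar> = y}"
      unfolding D_def using Ym by (subst measure_distr) (auto intro!: arg_cong[where f="measure M"])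
    also have "\<dots> \<ge> measure M {\<omega>\<in>space M. 1 < \<bar>Y 0 \<omega>\<bar>/s \<and> \<bar>Y j \<omega>/s\<bar> = c}"
    proof (rule finite_measure_mono)
      show "{\<omega>\<in>space M. \<bar>Y j \<omega>\<bar> = y} \<in> sets M" using Ym by measurable
      show "{\<omega>\<in>space M. 1 < \<bar>Y 0 \<omega>\<bar>/s \<and> \<bar>Y j \<omega>/s\<bar> = c} \<subseteq> {\<omega>\<in>space M. \<bar>Y j \<omega>\<bar> = y}"
        using s1 c by (auto simp: s_def abs_divide abs_mult field_simps)
    qed
    finally have "s powr (-\<alpha>) * measure M S4 \<le> measure D {y}" using key[OF s1] by simp
    moreover have "0 < s powr (-\<alpha>) * measure M S4" using s1 pos4 by simp
    ultimately show "y \<in> {y. measure D {y} \<noteq> 0}" by simp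
  qed
  then have "countable {c..2*c}" using D.countable_support countable_subset by blast
  then show False using c uncountable_closed_interval[of c "2*c"] by simp
qed

lemma pois_one:
  assumes P: "prob_space M" and H: "hom_poisson_01 M lam K T" and B: "B \<in> sets borel" "B \<subseteq> {0..1}"
  shows "pcount K T B \<in> measurable M (count_space UNIV)"
    and "\<And>n. measure M {\<omega>\<in>space M. pcount K T B \<omega> = n}
             = (lam * measure lborel B) ^ n / fact n * exp (- (lam * measure lborel B))"
proof -
  interpret prob_space M by (rule P)
  have pre: "(\<forall>j<1::nat. (\<lambda>_. B) j \<in> sets borel \<and> (\<lambda>_. B) j \<subseteq> {0..1}) \<and> disjoint_family_on (\<lambda>_::nat. B) {..<1}"
    using B by (simp add: disjoint_family_on_def)
  note h = H[unfolded hom_poisson_01_def, THEN conjunct2, THEN conjunct2, THEN conjunct2, rule_format, OF pre]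
  then show "pcount K T B \<in> measurable M (count_space UNIV)"
    unfolding indep_vars_def by auto
  show "\<And>n. measure M {\<omega>\<in>space M. pcount K T B \<omega> = n}
             = (lam * measure lborel B) ^ n / fact n * exp (- (lam * measure lborel B))"
    using h by auto
qed

lemma pcount_empty:
  "pcount K T B \<omega> = 0 \<Longrightarrow> i < K \<omega> \<Longrightarrow> T i \<omega> \<notin> B"
  unfolding pcount_def by auto

lemma pois_endpoint:
  assumes P: "prob_space M" and H: "hom_poisson_01 M lam K T" and t: "t \<in> {0..1}"
  shows "AE \<omega> in M. \<forall>i<K \<omega>. T i \<omega> \<noteq> t"
proof -
  interpret prob_space M by (rule P)
  have m: "pcount K T {t} \<in> measurable M (count_space UNIV)" and
    d: "measure M {\<omega>\<in>space M. pcount K T {t} \<omega> = 0} = 1"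
    using pois_one[OF P H, of "{t}"] t by auto
  have "AE \<omega> in M. \<omega> \<in> {\<omega>\<in>space M. pcount K T {t} \<omega> = 0}"
    by (rule AE_prob_1) (use d in simp)
  then show ?thesis
  proof eventually_elim
    case (elim \<omega>)
    then have "pcount K T {t} \<omega> = 0" by simp
    then show ?case using pcount_empty[of K T "{t}" \<omega>] by blast
  qed
qed

lemma bound2: "0 \<le> (\<mu>::real) \<Longrightarrow> 1 - exp (-\<mu>) - \<mu> * exp (-\<mu>) \<le> \<mu>^2"
proof -
  assume m: "0 \<le> \<mu>"
  have "1 - \<mu> \<le> exp (-\<mu>)" using exp_ge_add_one_self[of "-\<mu>"] by simp
  then have "(1 + \<mu>) * (1 - \<mu>) \<le> (1 + \<mu>) * exp (-\<mu>)" using m by (intro mult_left_mono) auto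
  then show ?thesis by (simp add: algebra_simps power2_eq_square)
qed

lemma cover_unit:
  assumes t: "t \<in> {0..(1::real)}" and n: "0 < n"
  shows "\<exists>k<n. t \<in> {real k / real n .. real (Suc k) / real n}"
proof (cases "t = 1")
  case True
  then show ?thesis using n by (intro exI[of _ "n - 1"]) (auto simp: field_simps of_nat_diff)
next
  case False
  then have t1: "0 \<le> t" "t < 1" using t by auto
  define k where "k = nat \<lfloor>t * n\<rfloor>"
  have f0: "0 \<le> \<lfloor>t * n\<rfloor>" using t1 by simp
  have k: "real k = of_int \<lfloor>t * n\<rfloor>" using f0 by (simp add: k_def)
  have a: "real k \<le> t * n" using k by linarith
  have b: "t * n < real k + 1" using k by linarith
  have "t * n < n" using t1 n by simp
  then have "k < n" using a by linarith
  moreover have "real k / n \<le> t" using a n by (simp add: field_simps)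
  moreover have "t \<le> real (Suc k) / n" using b n by (simp add: field_simps)
  ultimately show ?thesis by auto
qed

lemma card_ge2:
  assumes "i < K \<omega>" "i' < K \<omega>" "i \<noteq> i'" "T i \<omega> \<in> B" "T i' \<omega> \<in> B"
  shows "2 \<le> pcount K T B \<omega>"
proof -
  have "{i, i'} \<subseteq> {i. i < K \<omega> \<and> T i \<omega> \<in> B}" using assms by auto
  moreover have "finite {i. i < K \<omega> \<and> T i \<omega> \<in> B}" by simp
  ultimately have "card {i, i'} \<le> card {i. i < K \<omega> \<and> T i \<omega> \<in> B}" by (rule card_mono[rotated])
  then show ?thesis using assms(3) unfolding pcount_def by simp
qed

lemma pois_simple:
  assumes P: "prob_space M" and H: "hom_poisson_01 M lam K T" and lam: "0 \<le> lam"
  shows "AE \<omega> in M. \<forall>i<K \<omega>. \<forall>i'<K \<omega>. i \<noteq> i' \<longrightarrow> T i \<omega> \<noteq> T i' \<omega>"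
proof -
  interpret prob_space M by (rule P)
  have Km[measurable]: "K \<in> measurable M (count_space UNIV)" and Tm[measurable]: "\<And>i. T i \<in> borel_measurable M"
    and Tin: "\<And>\<omega> i. \<omega> \<in> space M \<Longrightarrow> i < K \<omega> \<Longrightarrow> T i \<omega> \<in> {0..1}"
    using H unfolding hom_poisson_01_def by auto
  define Bd where "Bd = {\<omega>\<in>space M. \<exists>i<K \<omega>. \<exists>i'<K \<omega>. i \<noteq> i' \<and> T i \<omega> = T i' \<omega>}"
  have Bdm: "Bd \<in> sets M" unfolding Bd_def by measurable
  have le: "measure M Bd \<le> lam^2 / n" if n: "0 < n" for n :: nat
  proof -
    define I where "I k = {real k / real n .. real (Suc k) / real n}" for k
    define G where "G k = {\<omega>\<in>space M. 2 \<le> pcount K T (I k) \<omega>}" for k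
    have Ib: "I k \<in> sets borel" for k unfolding I_def by simp
    have Isub: "I k \<subseteq> {0..1}" if "k < n" for k
      using that n unfolding I_def by (auto simp: field_simps)
    have Ilen: "measure lborel (I k) = 1 / n" for k
      unfolding I_def using n by (simp add: field_simps)
    have pm: "pcount K T (I k) \<in> measurable M (count_space UNIV)" if "k < n" for k
      using pois_one(1)[OF P H Ib Isub[OF that]] .
    have Gm: "G k \<in> sets M" if "k < n" for k
      using pm[OF that] unfolding G_def by measurable
    have Gb: "measure M (G k) \<le> (lam / n)^2" if k: "k < n" for k
    proof -
      define \<mu> where "\<mu> = lam / n"
      define G0 where "G0 = {\<omega>\<in>space M. pcount K T (I k) \<omega> = 0}"
      define G1 where "G1 = {\<omega>\<in>space M. pcount K T (I k) \<omega> = 1}"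
      have m0: "G0 \<in> sets M" using pm[OF k] unfolding G0_def by measurable
      have m1: "G1 \<in> sets M" using pm[OF k] unfolding G1_def by measurable
      have p0: "measure M G0 = exp (-\<mu>)"
        unfolding G0_def using pois_one(2)[OF P H Ib Isub[OF k], of 0] Ilen by (simp add: \<mu>_def)
      have p1: "measure M G1 = \<mu> * exp (-\<mu>)"
        unfolding G1_def using pois_one(2)[OF P H Ib Isub[OF k], of 1] Ilen by (simp add: \<mu>_def)
      have sp: "space M = (G0 \<union> G1) \<union> G k" unfolding G0_def G1_def G_def by auto
      have "1 = measure M ((G0 \<union> G1) \<union> G k)" using sp prob_space by simp
      also have "\<dots> = measure M (G0 \<union> G1) + measure M (G k)"
        by (rule finite_measure_Union) (use m0 m1 Gm[OF k] in \<open>auto simp: G0_def G1_def G_def\<close>)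
      also have "measure M (G0 \<union> G1) = measure M G0 + measure M G1"
        by (rule finite_measure_Union) (use m0 m1 in \<open>auto simp: G0_def G1_def\<close>)
      finally have "measure M (G k) = 1 - exp (-\<mu>) - \<mu> * exp (-\<mu>)" using p0 p1 by simp
      also have "\<dots> \<le> \<mu>^2" by (rule bound2) (use lam in \<open>simp add: \<mu>_def\<close>)
      finally show ?thesis by (simp add: \<mu>_def)
    qed
    have "Bd \<subseteq> (\<Union>k\<in>{..<n}. G k)"
    proof
      fix \<omega> assume "\<omega> \<in> Bd"
      then obtain i i' where ii: "\<omega> \<in> space M" "i < K \<omega>" "i' < K \<omega>" "i \<noteq> i'" "T i \<omega> = T i' \<omega>"
        unfolding Bd_def by auto
      obtain k where k: "k < n" "T i \<omega> \<in> I k" using cover_unit[OF Tin[OF ii(1,2)] n] unfolding I_def by auto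
      have "2 \<le> pcount K T (I k) \<omega>" using card_ge2[of i K \<omega> i' T "I k", OF ii(2,3,4)] k ii(5) by simp
      then show "\<omega> \<in> (\<Union>k\<in>{..<n}. G k)" using k ii(1) unfolding G_def by auto
    qed
    then have "measure M Bd \<le> measure M (\<Union>k\<in>{..<n}. G k)"
      by (intro finite_measure_mono) (use Gm in auto)
    also have "\<dots> \<le> (\<Sum>k<n. measure M (G k))"
      by (rule finite_measure_subadditive_finite) (use Gm in auto)
    also have "\<dots> \<le> (\<Sum>k<n. (lam / n)^2)" by (rule sum_mono) (use Gb in auto)
    also have "\<dots> = lam^2 / n" using n by (simp add: power2_eq_square field_simps)
    finally show ?thesis .
  qed
  have "measure M Bd = 0"
  proof (rule ccontr)
    assume "measure M Bd \<noteq> 0"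
    then have pos: "0 < measure M Bd" using measure_nonneg[of M Bd] by linarith
    obtain n :: nat where n: "lam^2 / measure M Bd < n" using reals_Archimedean2 by blast
    have n0: "0 < n" using n pos by (cases n) (auto simp: divide_less_0_iff)
    have "lam^2 < n * measure M Bd" using n pos by (simp add: divide_less_eq)
    moreover have "measure M Bd * n \<le> lam^2" using le[OF n0] n0 by (simp add: field_simps)
    ultimately show False by (simp add: mult.commute)
  qed
  then have "Bd \<in> null_sets M" using Bdm by (simp add: null_sets_def emeasure_eq_measure)
  then have "AE \<omega> in M. \<omega> \<notin> Bd" by (rule AE_I') auto
  then show ?thesis using AE_space by eventually_elim (auto simp: Bd_def)
qed

definition Q1 :: "(int \<Rightarrow> real) \<Rightarrow> bool" where
  "Q1 f \<longleftrightarrow> (\<forall>m::nat. \<exists>N::nat. \<forall>n::int. int N \<le> \<bar>n\<bar> \<longrightarrow> \<bar>f n\<bar> \<le> 1 / real (Suc m))"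
definition Q2 :: "(int \<Rightarrow> real) \<Rightarrow> bool" where
  "Q2 f \<longleftrightarrow> (\<forall>i j. \<not> (0 < f i \<and> f j < 0))"
definition Q3 :: "real \<Rightarrow> (int \<Rightarrow> real) \<Rightarrow> bool" where
  "Q3 c f \<longleftrightarrow> (\<forall>j. \<bar>f j\<bar> \<noteq> c)"

lemma Qm: "{f\<in>space (PiM UNIV (\<lambda>_::int. borel)). \<not> Q1 f} \<in> sets (PiM UNIV (\<lambda>_::int. borel))"
  "{f\<in>space (PiM UNIV (\<lambda>_::int. borel)). \<not> Q2 f} \<in> sets (PiM UNIV (\<lambda>_::int. borel))"
  "{f\<in>space (PiM UNIV (\<lambda>_::int. borel)). \<not> Q3 c f} \<in> sets (PiM UNIV (\<lambda>_::int. borel))"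
  unfolding Q1_def Q2_def Q3_def by measurable

lemma transfer:
  fixes M :: "'a measure" and Y :: "int \<Rightarrow> 'a \<Rightarrow> real" and Z :: "int \<Rightarrow> 'a \<Rightarrow> real"
  assumes P: "prob_space M" and Ym: "\<And>n. Y n \<in> borel_measurable M" and Zm: "\<And>n. Z n \<in> borel_measurable M"
    and law: "\<And>A. A \<in> sets (PiM UNIV (\<lambda>_::int. borel)) \<Longrightarrow>
                  measure M {\<omega>\<in>space M. (\<lambda>j. Z j \<omega>) \<in> A}
                  = measure M {\<omega>\<in>space M. (\<lambda>j. Y j \<omega>) \<in> A \<and> (\<forall>n\<le>-1. \<bar>Y n \<omega>\<bar> \<le> 1)} / th"
    and A: "A \<in> sets (PiM UNIV (\<lambda>_::int. borel))"
    and AY: "AE \<omega> in M. (\<lambda>j. Y j \<omega>) \<notin> A"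
  shows "AE \<omega> in M. (\<lambda>j. Z j \<omega>) \<notin> A"
proof -
  interpret prob_space M by (rule P)
  have Yv: "(\<lambda>\<omega> j. Y j \<omega>) \<in> measurable M (PiM UNIV (\<lambda>_::int. borel))"
    by (rule measurable_PiM_single') (use Ym in auto)
  have Zv: "(\<lambda>\<omega> j. Z j \<omega>) \<in> measurable M (PiM UNIV (\<lambda>_::int. borel))"
    by (rule measurable_PiM_single') (use Zm in auto)
  have "{\<omega>\<in>space M. (\<lambda>j. Y j \<omega>) \<in> A} = (\<lambda>\<omega> j. Y j \<omega>) -` A \<inter> space M" by auto
  then have SY: "{\<omega>\<in>space M. (\<lambda>j. Y j \<omega>) \<in> A} \<in> sets M" using measurable_sets[OF Yv A] by simp
  have "{\<omega>\<in>space M. (\<lambda>j. Z j \<omega>) \<in> A} = (\<lambda>\<omega> j. Z j \<omega>) -` A \<inter> space M" by auto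
  then have SZ: "{\<omega>\<in>space M. (\<lambda>j. Z j \<omega>) \<in> A} \<in> sets M" using measurable_sets[OF Zv A] by simp
  have "emeasure M {\<omega>\<in>space M. (\<lambda>j. Y j \<omega>) \<in> A} = 0"
  proof -
    have "(AE \<omega> in M. (\<lambda>j. Y j \<omega>) \<notin> A) = (emeasure M {\<omega>\<in>space M. (\<lambda>j. Y j \<omega>) \<in> A} = 0)"
      by (rule AE_iff_measurable[OF SY]) auto
    then show ?thesis using AY by simp
  qed
  then have y0: "measure M {\<omega>\<in>space M. (\<lambda>j. Y j \<omega>) \<in> A} = 0" by (simp add: measure_def)
  have "measure M {\<omega>\<in>space M. (\<lambda>j. Y j \<omega>) \<in> A \<and> (\<forall>n\<le>-1. \<bar>Y n \<omega>\<bar> \<le> 1)}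
        \<le> measure M {\<omega>\<in>space M. (\<lambda>j. Y j \<omega>) \<in> A}"
    by (rule finite_measure_mono) (use SY in auto)
  then have "measure M {\<omega>\<in>space M. (\<lambda>j. Y j \<omega>) \<in> A \<and> (\<forall>n\<le>-1. \<bar>Y n \<omega>\<bar> \<le> 1)} = 0"
    using y0 measure_nonneg[of M "{\<omega>\<in>space M. (\<lambda>j. Y j \<omega>) \<in> A \<and> (\<forall>n\<le>-1. \<bar>Y n \<omega>\<bar> \<le> 1)}"] by linarith
  then have "measure M {\<omega>\<in>space M. (\<lambda>j. Z j \<omega>) \<in> A} = 0" using law[OF A] by simp
  then have "{\<omega>\<in>space M. (\<lambda>j. Z j \<omega>) \<in> A} \<in> null_sets M" using SZ by (simp add: null_sets_def emeasure_eq_measure)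
  then show ?thesis by (rule AE_I') auto
qed

lemma ecard_empty: "ecard {} = 0" by (simp add: ecard_def zero_enat_def)

lemma ecard_eq0: "ecard A = 0 \<Longrightarrow> A = {}"
  by (auto simp: ecard_def zero_enat_def split: if_splits)

lemma ecard_inj: "inj_on f A \<Longrightarrow> ecard (f ` A) = ecard A"
  by (simp add: ecard_def finite_image_iff card_image)

lemma ecard_fin: "finite A \<Longrightarrow> ecard A \<noteq> \<infinity>"
  by (simp add: ecard_def)

lemma finite_slice:
  fixes C :: "(real \<times> ereal) set" and g :: "int \<Rightarrow> real"
  assumes C: "compact C" "C \<subseteq> {0..1} \<times> Eset v" and v: "0 < v" and q: "Q1 g"
  shows "finite {j. (t, ereal (v * g j)) \<in> C}"
proof (rule ccontr)
  define F where "F = {j. (t, ereal (v * g j)) \<in> C}"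
  assume inf: "infinite {j. (t, ereal (v * g j)) \<in> C}"
  define D where "D = snd ` C"
  have "compact D" unfolding D_def by (rule compact_continuous_image[OF continuous_on_snd[OF continuous_on_id] C(1)])
  then have cD: "closed D" by (rule compact_imp_closed)
  have DE: "D \<subseteq> Eset v" using C(2) unfolding D_def by auto
  have "\<exists>j\<in>F. \<bar>g j\<bar> \<le> 1 / real (Suc m)" for m
  proof -
    obtain N :: nat where N: "\<And>n. int N \<le> \<bar>n\<bar> \<Longrightarrow> \<bar>g n\<bar> \<le> 1 / real (Suc m)" using q unfolding Q1_def by blast
    have "\<not> F \<subseteq> {- int N..int N}" using inf unfolding F_def by (meson finite_atLeastAtMost_int finite_subset)
    then obtain j where "j \<in> F" "j \<notin> {- int N..int N}" by blast
    then show ?thesis using N[of j] by (intro bexI[of _ j]) auto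
  qed
  then obtain js where js: "\<And>m. js m \<in> F" "\<And>m. \<bar>g (js m)\<bar> \<le> 1 / real (Suc m)" by metis
  define r where "r m = v * g (js m)" for m
  have "r \<longlonglongrightarrow> 0"
  proof (rule Lim_null_comparison[where g="\<lambda>m. v / real (Suc m)"])
    show "\<forall>\<^sub>F m in sequentially. norm (r m) \<le> v / real (Suc m)"
    proof (intro always_eventually allI)
      fix m
      have "v * \<bar>g (js m)\<bar> \<le> v * (1 / real (Suc m))" using js(2)[of m] v by (intro mult_left_mono) auto
      then show "norm (r m) \<le> v / real (Suc m)" using v by (simp add: r_def abs_mult)
    qed
    show "(\<lambda>m. v / real (Suc m)) \<longlonglongrightarrow> 0"
      using tendsto_mult[OF tendsto_const[of v] LIMSEQ_inverse_real_of_nat] by (simp add: divide_inverse)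
  qed
  then have "(\<lambda>m. ereal (r m)) \<longlonglongrightarrow> ereal 0" by (rule tendsto_ereal)
  moreover have "ereal (r m) \<in> D" for m
  proof -
    have "(t, ereal (r m)) \<in> C" using js(1)[of m] unfolding F_def r_def by simp
    then show ?thesis unfolding D_def by (rule rev_image_eqI) simp
  qed
  ultimately have "ereal 0 \<in> D" using closed_sequentially[OF cD, of "\<lambda>m. ereal (r m)"] by blast
  then show False using DE v by (auto simp: Eset_def)
qed

lemma determ:
  fixes K :: "'a \<Rightarrow> nat" and T :: "nat \<Rightarrow> 'a \<Rightarrow> real" and Z :: "nat \<Rightarrow> int \<Rightarrow> 'a \<Rightarrow> real"
  assumes v: "0 < v" "v < u"
    and Tin: "\<And>i. i < K \<omega> \<Longrightarrow> T i \<omega> \<in> {0..1}"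
    and T0: "\<And>i. i < K \<omega> \<Longrightarrow> T i \<omega> \<noteq> 0" and T1: "\<And>i. i < K \<omega> \<Longrightarrow> T i \<omega> \<noteq> 1"
    and Td: "\<And>i i'. i < K \<omega> \<Longrightarrow> i' < K \<omega> \<Longrightarrow> i \<noteq> i' \<Longrightarrow> T i \<omega> \<noteq> T i' \<omega>"
    and Z1: "\<And>i. Q1 (\<lambda>j. Z i j \<omega>)" and Z2: "\<And>i. Q2 (\<lambda>j. Z i j \<omega>)" and Z3: "\<And>i. Q3 (u/v) (\<lambda>j. Z i j \<omega>)"
  shows "Nv v K T Z \<omega> \<in> Lambda1 v u \<inter> Lambda2 v"
proof -
  define S where "S = {(i,j). i < K \<omega> \<and> T i \<omega> \<in> {0..1} \<and> ereal (v * Z i j \<omega>) \<in> Eset v}"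
  define pt where "pt = (\<lambda>(i::nat,j::int). (T i \<omega>, ereal (v * Z i j \<omega>)))"
  have NvE: "Nv v K T Z \<omega> B = ecard {x\<in>S. pt x \<in> B}" for B
    unfolding Nv_def S_def pt_def by (intro arg_cong[where f=ecard]) auto
  have Mp: "Nv v K T Z \<omega> \<in> Mp ({0..1} \<times> Eset v)"
    unfolding Mp_def
  proof (intro CollectI conjI allI impI)
    show "\<exists>(I::nat set) p. p ` I \<subseteq> {0..1} \<times> Eset v \<and> (\<forall>B. Nv v K T Z \<omega> B = ecard {k\<in>I. p k \<in> B})"
    proof (intro exI conjI allI)
      show "(pt \<circ> from_nat) ` (to_nat ` S) \<subseteq> {0..1} \<times> Eset v"
        by (auto simp: S_def pt_def)
      fix B
      have "{k\<in>to_nat ` S. (pt \<circ> from_nat) k \<in> B} = to_nat ` {x\<in>S. pt x \<in> B}" by auto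
      moreover have "inj_on to_nat {x\<in>S. pt x \<in> B}" by (rule inj_on_subset[OF inj_to_nat]) simp
      ultimately show "Nv v K T Z \<omega> B = ecard {k\<in>to_nat ` S. (pt \<circ> from_nat) k \<in> B}"
        by (simp add: NvE ecard_inj)
    qed
  next
    fix C :: "(real \<times> ereal) set" assume C: "compact C \<and> C \<subseteq> {0..1} \<times> Eset v"
    have "{x\<in>S. pt x \<in> C} \<subseteq> (\<Union>i\<in>{..<K \<omega>}. (\<lambda>j. (i,j)) ` {j. (T i \<omega>, ereal (v * Z i j \<omega>)) \<in> C})"
      by (auto simp: S_def pt_def)
    moreover have "finite (\<Union>i\<in>{..<K \<omega>}. (\<lambda>j. (i,j)) ` {j. (T i \<omega>, ereal (v * Z i j \<omega>)) \<in> C})"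
      using finite_slice[of C v "\<lambda>j. Z _ j \<omega>"] C v Z1 by auto
    ultimately have "finite {x\<in>S. pt x \<in> C}" by (rule finite_subset)
    then show "Nv v K T Z \<omega> C \<noteq> \<infinity>" by (simp add: NvE ecard_fin)
  qed
  have A1: "{x\<in>S. pt x \<in> {0, 1} \<times> Eset u} = {}"
    using T0 T1 by (auto simp: S_def pt_def)
  have A2: "{x\<in>S. pt x \<in> {0..1} \<times> {\<infinity>, -\<infinity>, ereal u, - ereal u}} = {}"
  proof (rule ccontr)
    assume "{x\<in>S. pt x \<in> {0..1} \<times> {\<infinity>, -\<infinity>, ereal u, - ereal u}} \<noteq> {}"
    then obtain i j where "ereal (v * Z i j \<omega>) \<in> {\<infinity>, -\<infinity>, ereal u, - ereal u}"
      by (auto simp: S_def pt_def)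
    then have "v * Z i j \<omega> = u \<or> v * Z i j \<omega> = - u" by auto
    then have "\<bar>v * Z i j \<omega>\<bar> = u" using v by auto
    then have "v * \<bar>Z i j \<omega>\<bar> = u" using v by (simp add: abs_mult)
    then have "\<bar>Z i j \<omega>\<bar> = u / v" using v by (simp add: field_simps)
    then show False using Z3[of i] unfolding Q3_def by blast
  qed
  have L1: "Nv v K T Z \<omega> \<in> Lambda1 v u"
    unfolding Lambda1_def using Mp by (simp only: NvE A1 A2 ecard_empty mem_Collect_eq simp_thms)
  have L2: "Nv v K T Z \<omega> \<in> Lambda2 v"
    unfolding Lambda2_def
  proof (intro CollectI conjI ballI Mp)
    fix t :: real assume t: "t \<in> {0..1}"
    show "min (Nv v K T Z \<omega> ({t} \<times> {x. ereal v < x})) (Nv v K T Z \<omega> ({t} \<times> {x. x < - ereal v})) = 0"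
    proof (cases "{x\<in>S. pt x \<in> {t} \<times> {x. ereal v < x}} = {}")
      case True
      show ?thesis by (simp only: NvE True ecard_empty) simp
    next
      case False
      then obtain i j where ij: "i < K \<omega>" "T i \<omega> = t" "ereal v < ereal (v * Z i j \<omega>)"
        by (auto simp: S_def pt_def)
      have "{x\<in>S. pt x \<in> {t} \<times> {x. x < - ereal v}} = {}"
      proof (rule ccontr)
        assume "{x\<in>S. pt x \<in> {t} \<times> {x. x < - ereal v}} \<noteq> {}"
        then obtain i' j' where ij': "i' < K \<omega>" "T i' \<omega> = t" "ereal (v * Z i' j' \<omega>) < - ereal v"
          by (auto simp: S_def pt_def)
        have "i = i'" using Td[OF ij(1) ij'(1)] ij(2) ij'(2) by metis
        have "0 < Z i j \<omega>" using ij(3) v by (simp add: zero_less_mult_iff)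
        moreover have "Z i j' \<omega> < 0"
        proof -
          have "v * Z i' j' \<omega> < 0" using ij'(3) v by simp
          then have "Z i' j' \<omega> < 0" using v by (simp add: mult_less_0_iff)
          then show ?thesis using \<open>i = i'\<close> by simp
        qed
        ultimately show False using Z2[of i] unfolding Q2_def by blast
      qed
      then have E: "{x\<in>S. pt x \<in> {t} \<times> {x. x < - ereal v}} = {}" .
      show ?thesis by (simp only: NvE E ecard_empty) simp
    qed
  qed
  show ?thesis using L1 L2 by blast
qed


lemma Q1_of_lim:
  fixes g :: "int \<Rightarrow> real"
  assumes t: "((\<lambda>n. \<bar>g n\<bar>) \<longlongrightarrow> 0) at_top" and b: "((\<lambda>n. \<bar>g n\<bar>) \<longlongrightarrow> 0) at_bot"
  shows "Q1 g"
  unfolding Q1_def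
proof
  fix m :: nat
  have e: "(0::real) < 1 / real (Suc m)" by simp
  have "eventually (\<lambda>n. \<bar>g n\<bar> < 1 / real (Suc m)) at_top" using order_tendstoD(2)[OF t e] .
  then obtain N1 where N1: "\<And>n. N1 \<le> n \<Longrightarrow> \<bar>g n\<bar> < 1 / real (Suc m)" unfolding eventually_at_top_linorder by blast
  have "eventually (\<lambda>n. \<bar>g n\<bar> < 1 / real (Suc m)) at_bot" using order_tendstoD(2)[OF b e] .
  then obtain N2 where N2: "\<And>n. n \<le> N2 \<Longrightarrow> \<bar>g n\<bar> < 1 / real (Suc m)" unfolding eventually_at_bot_linorder by blast
  show "\<exists>N::nat. \<forall>n::int. int N \<le> \<bar>n\<bar> \<longrightarrow> \<bar>g n\<bar> \<le> 1 / real (Suc m)"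
  proof (intro exI allI impI)
    fix n :: int assume n: "int (nat (max \<bar>N1\<bar> \<bar>N2\<bar>)) \<le> \<bar>n\<bar>"
    show "\<bar>g n\<bar> \<le> 1 / real (Suc m)"
    proof (cases "0 \<le> n")
      case True
      then have "N1 \<le> n" using n by linarith
      then show ?thesis using N1 by fastforce
    next
      case False
      then have "n \<le> N2" using n by linarith
      then show ?thesis using N2 by fastforce
    qed
  qed
qed

lemma space_PiM_int: "f \<in> space (PiM UNIV (\<lambda>_::int. borel :: real measure))"
  by (simp add: space_PiM)

theorem lemma3p1:
  fixes M :: "'a measure"
    and X Y :: "int \<Rightarrow> 'a \<Rightarrow> real"
    and \<alpha> v u :: real
    and K :: "'a \<Rightarrow> nat"
    and T :: "nat \<Rightarrow> 'a \<Rightarrow> real"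
    and Z :: "nat \<Rightarrow> int \<Rightarrow> 'a \<Rightarrow> real"
  assumes P: "prob_space M"
    and X_meas: "\<And>n. X n \<in> borel_measurable M"
    and Y_meas: "\<And>n. Y n \<in> borel_measurable M"
    and Z_meas: "\<And>i j. Z i j \<in> borel_measurable M"
    and alpha_pos: "0 < \<alpha>"
    and stat: "strictly_stationary M X"
    and jrv: "jointly_regvar M X \<alpha>"
    and tail: "tail_process M X Y \<alpha>"
    and theta_pos: "0 < measure M {\<omega>\<in>space M. \<forall>i\<le>-1. \<bar>Y i \<omega>\<bar> \<le> 1}"
    and Y_vanish: "AE \<omega> in M. ((\<lambda>n. \<bar>Y n \<omega>\<bar>) \<longlongrightarrow> 0) at_top \<and> ((\<lambda>n. \<bar>Y n \<omega>\<bar>) \<longlongrightarrow> 0) at_bot"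
    and vu: "0 < v" "v < u"
    and poisson: "hom_poisson_01 M
                    (measure M {\<omega>\<in>space M. \<forall>i\<le>-1. \<bar>Y i \<omega>\<bar> \<le> 1} * v powr (-\<alpha>)) K T"
    and Z_iid: "prob_space.indep_vars M (\<lambda>_. PiM UNIV (\<lambda>_::int. borel)) (\<lambda>i \<omega> j. Z i j \<omega>) UNIV"
    and Z_law: "\<And>i A. A \<in> sets (PiM UNIV (\<lambda>_::int. borel)) \<Longrightarrow>
                  measure M {\<omega>\<in>space M. (\<lambda>j. Z i j \<omega>) \<in> A}
                  = measure M {\<omega>\<in>space M. (\<lambda>j. Y j \<omega>) \<in> A \<and> (\<forall>n\<le>-1. \<bar>Y n \<omega>\<bar> \<le> 1)}
                    / measure M {\<omega>\<in>space M. \<forall>n\<le>-1. \<bar>Y n \<omega>\<bar> \<le> 1}"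
    and indep_PZ: "prob_space.indep_set M
                    (sigma_sets (space M)
                      {(\<lambda>\<omega>. (K \<omega>, \<lambda>i. if i < K \<omega> then T i \<omega> else 0)) -` A \<inter> space M | A.
                         A \<in> sets (count_space UNIV \<Otimes>\<^sub>M PiM UNIV (\<lambda>_::nat. borel))})
                    (sigma_sets (space M)
                      {(\<lambda>\<omega> i j. Z i j \<omega>) -` A \<inter> space M | A.
                         A \<in> sets (PiM UNIV (\<lambda>_::nat. PiM UNIV (\<lambda>_::int. borel)))})"
    and no_opp_sign: "AE \<omega> in M. \<forall>i j. \<not> (0 < Y i \<omega> \<and> Y j \<omega> < 0)"
  shows "AE \<omega> in M. Nv v K T Z \<omega> \<in> Lambda1 v u \<inter> Lambda2 v"
proof -
  interpret prob_space M by (rule P)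
  define th where "th = measure M {\<omega>\<in>space M. \<forall>i\<le>-1. \<bar>Y i \<omega>\<bar> \<le> 1}"
  define lam where "lam = th * v powr (-\<alpha>)"
  have lam0: "0 \<le> lam" unfolding lam_def th_def by simp
  have H: "hom_poisson_01 M lam K T" using poisson unfolding lam_def th_def .
  have Tin: "\<And>\<omega> i. \<omega> \<in> space M \<Longrightarrow> i < K \<omega> \<Longrightarrow> T i \<omega> \<in> {0..1}"
    using H unfolding hom_poisson_01_def by auto
  have E0: "AE \<omega> in M. \<forall>i<K \<omega>. T i \<omega> \<noteq> 0" by (rule pois_endpoint[OF P H]) simp
  have E1: "AE \<omega> in M. \<forall>i<K \<omega>. T i \<omega> \<noteq> 1" by (rule pois_endpoint[OF P H]) simp
  have ED: "AE \<omega> in M. \<forall>i<K \<omega>. \<forall>i'<K \<omega>. i \<noteq> i' \<longrightarrow> T i \<omega> \<noteq> T i' \<omega>"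
    by (rule pois_simple[OF P H lam0])
  have YQ1: "AE \<omega> in M. Q1 (\<lambda>j. Y j \<omega>)"
    using Y_vanish by eventually_elim (intro Q1_of_lim; blast)
  have YQ2: "AE \<omega> in M. Q2 (\<lambda>j. Y j \<omega>)"
    using no_opp_sign by eventually_elim (simp add: Q2_def)
  have YQ3: "AE \<omega> in M. Q3 (u/v) (\<lambda>j. Y j \<omega>)"
  proof -
    have c: "0 < u / v" using vu by simp
    have "AE \<omega> in M. \<bar>Y j \<omega>\<bar> \<noteq> u / v" for j
    proof -
      have m: "{\<omega>\<in>space M. \<bar>Y j \<omega>\<bar> = u / v} \<in> sets M" using Y_meas by measurable
      have "measure M {\<omega>\<in>space M. \<bar>Y j \<omega>\<bar> = u / v} = 0" by (rule no_atom[OF P tail Y_meas c])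
      then have "{\<omega>\<in>space M. \<bar>Y j \<omega>\<bar> = u / v} \<in> null_sets M" using m by (simp add: null_sets_def emeasure_eq_measure)
      then show ?thesis by (rule AE_I') auto
    qed
    then have "AE \<omega> in M. \<forall>j. \<bar>Y j \<omega>\<bar> \<noteq> u / v" by (simp add: AE_all_countable)
    then show ?thesis by eventually_elim (simp add: Q3_def)
  qed
  have tr: "AE \<omega> in M. Q (\<lambda>j. Z i j \<omega>)"
    if Qm: "{f\<in>space (PiM UNIV (\<lambda>_::int. borel)). \<not> Q f} \<in> sets (PiM UNIV (\<lambda>_::int. borel))"
      and YQ: "AE \<omega> in M. Q (\<lambda>j. Y j \<omega>)" for Q i
  proof -
    have "AE \<omega> in M. (\<lambda>j. Z i j \<omega>) \<notin> {f\<in>space (PiM UNIV (\<lambda>_::int. borel)). \<not> Q f}"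
    proof (rule transfer[OF P Y_meas, of "Z i" _ th])
      show "\<And>n. Z i n \<in> borel_measurable M" by (rule Z_meas)
      show "\<And>A. A \<in> sets (PiM UNIV (\<lambda>_::int. borel)) \<Longrightarrow>
                  measure M {\<omega>\<in>space M. (\<lambda>j. Z i j \<omega>) \<in> A}
                  = measure M {\<omega>\<in>space M. (\<lambda>j. Y j \<omega>) \<in> A \<and> (\<forall>n\<le>-1. \<bar>Y n \<omega>\<bar> \<le> 1)} / th"
        unfolding th_def by (rule Z_law)
      show "AE \<omega> in M. (\<lambda>j. Y j \<omega>) \<notin> {f\<in>space (PiM UNIV (\<lambda>_::int. borel)). \<not> Q f}"
        using YQ by eventually_elim simp
    qed (rule Qm)
    then show ?thesis by eventually_elim (simp add: space_PiM_int)
  qed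
  have ZQ1: "AE \<omega> in M. \<forall>i. Q1 (\<lambda>j. Z i j \<omega>)"
    by (simp add: AE_all_countable) (intro allI; rule tr[OF Qm(1) YQ1])
  have ZQ2: "AE \<omega> in M. \<forall>i. Q2 (\<lambda>j. Z i j \<omega>)"
    by (simp add: AE_all_countable) (intro allI; rule tr[OF Qm(2) YQ2])
  have ZQ3: "AE \<omega> in M. \<forall>i. Q3 (u/v) (\<lambda>j. Z i j \<omega>)"
    by (simp add: AE_all_countable) (intro allI; rule tr[OF Qm(3) YQ3])
  show ?thesis
    using AE_space E0 E1 ED ZQ1 ZQ2 ZQ3
  proof eventually_elim
    case (elim \<omega>)
    show ?case
      using elim Tin by (intro determ[OF vu]) auto
  qed
qed

end
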